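(* Let $p$ be a prime, $d \ge 0$ an integer, $G=(\mathbb{Z}/p\mathbb{Z})^d$, and let $t, r$ be integers with $0 \leq t \leq d$, $p^t < r \leq p^{t+1}$ (and $r \le p^d$, so that $\rho_G^-(r)$ is defined). Then \[\rho_G^-(r) \leq p^t \min\left\{ 2\left\lceil\frac{r}{p^t}\right\rceil - 1,\ p\right\}.\]
   Context: For a finite abelian group $(G,+)$ of order $N$ and subsets $A, B \subseteq G$, write $A - B = \{a - b \mid a \in A, b \in B\}$. For $1 \le r \le N$ define $\rho^-_G(r) = \min \{|A - A| \mid A \subseteq G, |A| = r\}$. *)

theory Defs
  imports "HOL-Computational_Algebra.Primes" Complex_Main
begin

text \<open>Model of G = (Z/pZ)^d: functions nat => int supported on {0..<d}
  with values in {0..<p}; the group operation is componentwise mod p.\<close>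

definition zpd :: "nat \<Rightarrow> nat \<Rightarrow> (nat \<Rightarrow> int) set" where
  "zpd p d = {v. (\<forall>i<d. 0 \<le> v i \<and> v i < int p) \<and> (\<forall>i\<ge>d. v i = 0)}"

definition zpd_sub :: "nat \<Rightarrow> nat \<Rightarrow> (nat \<Rightarrow> int) \<Rightarrow> (nat \<Rightarrow> int) \<Rightarrow> (nat \<Rightarrow> int)" where
  "zpd_sub p d u v = (\<lambda>i. if i < d then (u i - v i) mod int p else 0)"

definition zpd_diffset :: "nat \<Rightarrow> nat \<Rightarrow> (nat \<Rightarrow> int) set \<Rightarrow> (nat \<Rightarrow> int) set" where
  "zpd_diffset p d A = {zpd_sub p d a b | a b. a \<in> A \<and> b \<in> A}"

definition rho_minus :: "nat \<Rightarrow> nat \<Rightarrow> nat \<Rightarrow> nat" where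
  "rho_minus p d r = Min {card (zpd_diffset p d A) | A. A \<subseteq> zpd p d \<and> card A = r}"

end

theory Submission
  imports Defs "HOL-Library.FuncSet"
begin

definition gv :: "nat \<Rightarrow> (nat \<Rightarrow> int) \<times> int \<Rightarrow> (nat \<Rightarrow> int)" where
  "gv t fx = (\<lambda>i. if i < t then fst fx i else if i = t then snd fx else 0)"

lemma gv_inj: "inj_on (gv t) (PiE {0..<t} F \<times> X)"
proof (rule inj_onI)
  fix a b assume a: "a \<in> PiE {0..<t} F \<times> X" and b: "b \<in> PiE {0..<t} F \<times> X"
    and e: "gv t a = gv t b"
  obtain f x g y where ab: "a = (f,x)" "b = (g,y)" by fastforce
  have "x = y" using fun_cong[OF e, of t] ab by (simp add: gv_def)
  moreover have "f = g"
  proof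
    fix i show "f i = g i"
    proof (cases "i < t")
      case True then show ?thesis using fun_cong[OF e, of i] ab by (simp add: gv_def)
    next
      case False then show ?thesis using a b ab by (auto simp: PiE_def extensional_def)
    qed
  qed
  ultimately show "a = b" using ab by simp
qed

lemma zpd_finite: "finite (zpd p d)"
proof -
  have "zpd p d \<subseteq> (\<lambda>f i. if i < d then f i else 0) ` PiE {0..<d} (\<lambda>_. {0..<int p})"
  proof
    fix v assume v: "v \<in> zpd p d"
    have "v = (\<lambda>i. if i < d then (restrict v {0..<d}) i else 0)"
      using v by (auto simp: zpd_def)
    moreover have "restrict v {0..<d} \<in> PiE {0..<d} (\<lambda>_. {0..<int p})"
      using v by (auto simp: zpd_def)
    ultimately show "v \<in> (\<lambda>f i. if i < d then f i else 0) ` PiE {0..<d} (\<lambda>_. {0..<int p})"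
      by blast
  qed
  thus ?thesis by (rule finite_subset) (auto intro: finite_PiE)
qed

lemma diffset_sub: "zpd_diffset p d A \<subseteq> zpd p d" if "p > 0"
  using that by (auto simp: zpd_diffset_def zpd_sub_def zpd_def)

lemma rho_le: assumes "A \<subseteq> zpd p d" "card A = r"
  shows "rho_minus p d r \<le> card (zpd_diffset p d A)"
proof -
  have "{card (zpd_diffset p d A) | A. A \<subseteq> zpd p d \<and> card A = r}
        \<subseteq> (\<lambda>A. card (zpd_diffset p d A)) ` Pow (zpd p d)" by blast
  hence fin: "finite {card (zpd_diffset p d A) | A. A \<subseteq> zpd p d \<and> card A = r}"
    using zpd_finite by (meson finite_Pow_iff finite_imageI finite_subset)
  show ?thesis unfolding rho_minus_def
    by (rule Min_le[OF fin]) (use assms in blast)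
qed

theorem mainTheorem5:
  fixes p d t r :: nat
  assumes "prime p" and "t \<le> d" and "p ^ t < r" and "r \<le> p ^ (t + 1)" and "r \<le> p ^ d"
  shows "int (rho_minus p d r)
           \<le> int (p ^ t) * min (2 * \<lceil>real r / real (p ^ t)\<rceil> - 1) (int p)"
proof -
  have p0: "p > 0" "p \<ge> 2" using assms(1) prime_gt_0_nat prime_ge_2_nat by auto
  define P where "P = p ^ t"
  have P0: "P > 0" using p0 by (simp add: P_def)
  have "t < d"
  proof (rule ccontr)
    assume "\<not> t < d" hence "t = d" using assms(2) by simp
    thus False using assms(3,5) by simp
  qed
  define c where "c = \<lceil>real r / real P\<rceil>"
  have c1: "c \<ge> 1" using P0 assms(3) by (simp add: c_def P_def)
  have "real r / real P \<le> real p"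
  proof -
    have "real r \<le> real p * real P" using assms(4) unfolding P_def
      by (metis of_nat_le_iff of_nat_mult power_Suc Suc_eq_plus1)
    thus ?thesis using P0 by (simp add: divide_le_eq mult.commute)
  qed
  hence cp: "c \<le> int p" unfolding c_def by (simp add: ceiling_le_iff)
  have rc: "real r \<le> real_of_int c * real P"
  proof -
    have "real r / real P \<le> real_of_int c" unfolding c_def by (rule le_of_int_ceiling)
    thus ?thesis using P0 by (simp add: divide_le_eq)
  qed
  define k where "k = nat c"
  have kc: "int k = c" using c1 by (simp add: k_def)
  have rk: "r \<le> k * P"
  proof -
    have "real r \<le> real k * real P" using rc kc by (metis of_int_of_nat_eq)
    thus ?thesis by (simp flip: of_nat_mult)
  qed
  define F where "F = PiE {0..<t} (\<lambda>_. {0..<int p})"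
  have cardF: "card F = P" by (simp add: F_def card_PiE P_def)
  have finF: "finite F" by (simp add: F_def finite_PiE)
  define B where "B = gv t ` (F \<times> {0..<int k})"
  have cardB: "card B = P * k"
    unfolding B_def using gv_inj[of t "\<lambda>_. {0..<int p}" "{0..<int k}"]
    by (simp add: card_image F_def[symmetric] card_cartesian_product cardF)
  have BZ: "B \<subseteq> zpd p d"
    using \<open>t < d\<close> kc cp unfolding B_def F_def zpd_def gv_def by (auto simp: PiE_def Pi_def)
  obtain A where A: "A \<subseteq> B" "card A = r"
    using obtain_subset_with_card_n[of r B] rk cardB by (metis mult.commute)
  define S where "S = (\<lambda>z. z mod int p) ` {-(c-1)..c-1}"
  have cardS1: "card S \<le> nat (2*c - 1)"
    unfolding S_def using card_image_le[of "{-(c-1)..c-1}" "\<lambda>z. z mod int p"] c1 by simp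
  have cardS2: "card S \<le> p"
  proof -
    have "S \<subseteq> {0..<int p}" using p0 by (auto simp: S_def)
    hence "card S \<le> card {0..<int p}" by (intro card_mono) auto
    thus ?thesis by simp
  qed
  have sub: "zpd_diffset p d A \<subseteq> gv t ` (F \<times> S)"
  proof
    fix w assume "w \<in> zpd_diffset p d A"
    then obtain a b where ab: "a \<in> A" "b \<in> A" "w = zpd_sub p d a b"
      by (auto simp: zpd_diffset_def)
    obtain f x g y where fx: "f \<in> F" "x \<in> {0..<int k}" "a = gv t (f,x)"
      and gy: "g \<in> F" "y \<in> {0..<int k}" "b = gv t (g,y)"
      using ab A(1) unfolding B_def by blast
    define h where "h = restrict (\<lambda>i. (f i - g i) mod int p) {0..<t}"
    have hF: "h \<in> F" using p0 by (simp add: h_def F_def)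
    have xyS: "(x - y) mod int p \<in> S" unfolding S_def using fx(2) gy(2) kc by auto
    have "w = gv t (h, (x - y) mod int p)"
      using \<open>t < d\<close> unfolding ab(3) fx(3) gy(3) zpd_sub_def gv_def h_def by auto
    thus "w \<in> gv t ` (F \<times> S)" using hF xyS by blast
  qed
  have finS: "finite S" by (simp add: S_def)
  have "rho_minus p d r \<le> card (zpd_diffset p d A)"
    using rho_le A BZ by (meson order_trans)
  also have "\<dots> \<le> card (gv t ` (F \<times> S))"
    using sub finF finS by (intro card_mono) auto
  also have "\<dots> \<le> card (F \<times> S)" by (rule card_image_le) (use finF finS in auto)
  also have "\<dots> = P * card S" by (simp add: card_cartesian_product cardF)
  finally have main: "rho_minus p d r \<le> P * card S" .
  have "int (card S) \<le> min (2*c - 1) (int p)" using cardS1 cardS2 c1 by linarith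
  hence "int P * int (card S) \<le> int P * min (2*c - 1) (int p)"
    by (intro mult_left_mono) auto
  thus ?thesis using main unfolding c_def P_def
    by (metis (no_types, lifting) of_nat_le_iff of_nat_mult order_trans)
qed

end
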